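(* Let $(u,m)$ be a pair of smooth (classical) solutions to the system \[ \begin{cases} u_t + \frac{\sigma^2}{2} u_{xx} - ru + G(u_x,m)^2 = 0, & 0<t<T,\ 0<x<L,\\ m_t - \frac{\sigma^2}{2} m_{xx} - \{G(u_x,m)m\}_x = 0, & 0<t<T,\ 0<x<L,\\ m(0,x)=m_0(x),\quad u(T,x)=u_T(x), & 0\le x\le L,\\ u_x(t,0)=u_x(t,L)=0, & 0\le t\le T,\\ \frac{\sigma^2}{2} m_x(t,x) + G(u_x,m)m(t,x) = 0, & 0\le t\le T,\ x\in\{0,L\}, \end{cases} \] where $G(u_x,m)(t,x) := \frac12\left(b + c\int_0^L u_x(t,y)m(t,y)\,dy - u_x(t,x)\right)$. Then for all $t\in[0,T]$, $m(t,\cdot)$ is a probability density on $[0,L]$, and $u(t,x)\ge 0$ for all $t\in[0,T]$, $x\in[0,L]$. Moreover, there is a constant $C>0$ depending only on the data such that \[ \int_0^T\int_0^L m\,u_x^2\,dx\,dt \le C. \]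
   Context: Standing setting: $L,T,\sigma,r>0$ are constants, $\epsilon>0$, and $b=\frac{2}{2+\epsilon}$, $c=\frac{\epsilon}{2+\epsilon}$. The data satisfy: $u_T,m_0\in C^{2+\gamma}([0,L])$ for some $\gamma>0$; $u_T'(0)=u_T'(L)=0$ and $m_0(0)=m_0'(0)=m_0(L)=m_0'(L)=0$; $m_0$ is a probability density on $[0,L]$; $u_T\ge 0$. "Depending only on the data" means depending only on $u_T,m_0,L,T,\sigma,r,\epsilon$. *)

theory Defs
  imports "HOL-Analysis.Analysis"
begin

definition holder_on :: "real \<Rightarrow> real set \<Rightarrow> (real \<Rightarrow> real) \<Rightarrow> bool" where
  "holder_on \<gamma> S f \<longleftrightarrow> (\<exists>K. \<forall>x\<in>S. \<forall>y\<in>S. \<bar>f x - f y\<bar> \<le> K * \<bar>x - y\<bar> powr \<gamma>)"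

definition C2_holder :: "real \<Rightarrow> real \<Rightarrow> (real \<Rightarrow> real) \<Rightarrow> (real \<Rightarrow> real) \<Rightarrow> (real \<Rightarrow> real) \<Rightarrow> bool" where
  "C2_holder \<gamma> L f f1 f2 \<longleftrightarrow>
     (\<forall>x\<in>{0..L}. (f has_real_derivative f1 x) (at x within {0..L})
                 \<and> (f1 has_real_derivative f2 x) (at x within {0..L}))
     \<and> holder_on \<gamma> {0..L} f2"

definition prob_density :: "real \<Rightarrow> (real \<Rightarrow> real) \<Rightarrow> bool" where
  "prob_density L f \<longleftrightarrow> (\<forall>x\<in>{0..L}. 0 \<le> f x) \<and> f integrable_on {0..L} \<and> integral {0..L} f = 1"

definition Gterm :: "real \<Rightarrow> real \<Rightarrow> real \<Rightarrow> (real \<Rightarrow> real \<Rightarrow> real) \<Rightarrow> (real \<Rightarrow> real \<Rightarrow> real)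
                     \<Rightarrow> real \<Rightarrow> real \<Rightarrow> real" where
  "Gterm L b c ux m t x = (b + c * integral {0..L} (\<lambda>y. ux t y * m t y) - ux t x) / 2"

definition mfg_solution ::
  "real \<Rightarrow> real \<Rightarrow> real \<Rightarrow> real \<Rightarrow> real \<Rightarrow> real \<Rightarrow> (real \<Rightarrow> real) \<Rightarrow> (real \<Rightarrow> real)
   \<Rightarrow> (real \<Rightarrow> real \<Rightarrow> real) \<Rightarrow> (real \<Rightarrow> real \<Rightarrow> real) \<Rightarrow> (real \<Rightarrow> real \<Rightarrow> real) \<Rightarrow> (real \<Rightarrow> real \<Rightarrow> real)
   \<Rightarrow> (real \<Rightarrow> real \<Rightarrow> real) \<Rightarrow> (real \<Rightarrow> real \<Rightarrow> real) \<Rightarrow> (real \<Rightarrow> real \<Rightarrow> real) \<Rightarrow> (real \<Rightarrow> real \<Rightarrow> real)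
   \<Rightarrow> bool" where
  "mfg_solution L T \<sigma> r b c uT m0 u ut ux uxx m mt mx mxx \<longleftrightarrow>
     \<comment> \<open>regularity\<close>
     (\<forall>t\<in>{0..T}. \<forall>x\<in>{0..L}.
        ((\<lambda>s. u s x) has_real_derivative ut t x) (at t within {0..T}) \<and>
        ((\<lambda>y. u t y) has_real_derivative ux t x) (at x within {0..L}) \<and>
        ((\<lambda>y. ux t y) has_real_derivative uxx t x) (at x within {0..L}) \<and>
        ((\<lambda>s. m s x) has_real_derivative mt t x) (at t within {0..T}) \<and>
        ((\<lambda>y. m t y) has_real_derivative mx t x) (at x within {0..L}) \<and>
        ((\<lambda>y. mx t y) has_real_derivative mxx t x) (at x within {0..L})) \<and>
     continuous_on ({0..T} \<times> {0..L}) (\<lambda>(t,x). u t x) \<and>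
     continuous_on ({0..T} \<times> {0..L}) (\<lambda>(t,x). ut t x) \<and>
     continuous_on ({0..T} \<times> {0..L}) (\<lambda>(t,x). ux t x) \<and>
     continuous_on ({0..T} \<times> {0..L}) (\<lambda>(t,x). uxx t x) \<and>
     continuous_on ({0..T} \<times> {0..L}) (\<lambda>(t,x). m t x) \<and>
     continuous_on ({0..T} \<times> {0..L}) (\<lambda>(t,x). mt t x) \<and>
     continuous_on ({0..T} \<times> {0..L}) (\<lambda>(t,x). mx t x) \<and>
     continuous_on ({0..T} \<times> {0..L}) (\<lambda>(t,x). mxx t x) \<and>
     \<comment> \<open>HJB equation\<close>
     (\<forall>t x. 0 < t \<and> t < T \<and> 0 < x \<and> x < L \<longrightarrow>
        ut t x + \<sigma>\<^sup>2 / 2 * uxx t x - r * u t x + (Gterm L b c ux m t x)\<^sup>2 = 0) \<and>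
     \<comment> \<open>Fokker-Planck equation\<close>
     (\<forall>t x. 0 < t \<and> t < T \<and> 0 < x \<and> x < L \<longrightarrow>
        (\<exists>D. ((\<lambda>y. Gterm L b c ux m t y * m t y) has_real_derivative D) (at x) \<and>
             mt t x - \<sigma>\<^sup>2 / 2 * mxx t x - D = 0)) \<and>
     \<comment> \<open>initial / terminal data\<close>
     (\<forall>x\<in>{0..L}. m 0 x = m0 x \<and> u T x = uT x) \<and>
     \<comment> \<open>Neumann condition for u\<close>
     (\<forall>t\<in>{0..T}. ux t 0 = 0 \<and> ux t L = 0) \<and>
     \<comment> \<open>no-flux condition for m\<close>
     (\<forall>t\<in>{0..T}. \<forall>x\<in>{0, L}. \<sigma>\<^sup>2 / 2 * mx t x + Gterm L b c ux m t x * m t x = 0)"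

end

theory Submission
  imports Defs
begin

lemma deriv_min_right:
  fixes f :: "real \<Rightarrow> real"
  assumes "(f has_real_derivative l) (at x within S)" "d > 0"
    "\<And>h. 0 < h \<Longrightarrow> h < d \<Longrightarrow> x + h \<in> S \<and> f x \<le> f (x + h)"
  shows "0 \<le> l"
proof (rule ccontr)
  assume "\<not> 0 \<le> l"
  then obtain d' where d': "d' > 0" "\<forall>h>0. x + h \<in> S \<longrightarrow> h < d' \<longrightarrow> f x > f (x + h)"
    using has_real_derivative_neg_dec_right[OF assms(1)] by force
  define h where "h = min d d' / 2"
  have "0 < h" "h < d" "h < d'" using d' assms(2) by (auto simp: h_def)
  with assms(3)[of h] d' show False by force
qed

lemma deriv_min_left:
  fixes f :: "real \<Rightarrow> real"
  assumes "(f has_real_derivative l) (at x within S)" "d > 0"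
    "\<And>h. 0 < h \<Longrightarrow> h < d \<Longrightarrow> x - h \<in> S \<and> f x \<le> f (x - h)"
  shows "l \<le> 0"
proof (rule ccontr)
  assume "\<not> l \<le> 0"
  then obtain d' where d': "d' > 0" "\<forall>h>0. x - h \<in> S \<longrightarrow> h < d' \<longrightarrow> f (x - h) < f x"
    using has_real_derivative_pos_inc_left[OF assms(1)] by force
  define h where "h = min d d' / 2"
  have "0 < h" "h < d" "h < d'" using d' assms(2) by (auto simp: h_def)
  with assms(3)[of h] d' show False by force
qed

lemma second_deriv_min:
  fixes f f1 :: "real \<Rightarrow> real"
  assumes ab: "a < b" and x0: "x0 \<in> {a..b}"
    and d1: "\<And>x. x \<in> {a..b} \<Longrightarrow> (f has_real_derivative f1 x) (at x within {a..b})"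
    and d2: "(f1 has_real_derivative f2) (at x0 within {a..b})"
    and z: "f1 x0 = 0" and mn: "\<And>x. x \<in> {a..b} \<Longrightarrow> f x0 \<le> f x"
  shows "0 \<le> f2"
proof (rule ccontr)
  assume neg: "\<not> 0 \<le> f2"
  have dsub: "(f has_derivative (\<lambda>h. f1 x * h)) (at x within {p..q})"
    if "a \<le> p" "q \<le> b" "x \<in> {p..q}" for p q x
  proof -
    have "(f has_real_derivative f1 x) (at x within {a..b})" using d1 that by auto
    then have "(f has_real_derivative f1 x) (at x within {p..q})"
      by (rule has_field_derivative_subset) (use that in auto)
    then show ?thesis by (simp add: has_field_derivative_def)
  qed
  show False
  proof (cases "x0 < b")
    case True
    from neg obtain d where d: "d > 0" "\<forall>h>0. x0 + h \<in> {a..b} \<longrightarrow> h < d \<longrightarrow> f1 x0 > f1 (x0 + h)"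
      using has_real_derivative_neg_dec_right[OF d2] by force
    define x1 where "x1 = x0 + min (d/2) (b - x0)"
    have x1: "x0 < x1" "x1 \<le> b" "x1 < x0 + d" using True d by (auto simp: x1_def)
    obtain \<xi> where xi: "\<xi> \<in> {x0<..<x1}" "f x1 - f x0 = f1 \<xi> * (x1 - x0)"
      using mvt_simple[OF x1(1), of f "\<lambda>x h. f1 x * h"] dsub x0 x1 by force
    have "f1 \<xi> < 0" using d(2)[rule_format, of "\<xi> - x0"] xi x0 x1 z by auto
    then have "f1 \<xi> * (x1 - x0) < 0" using xi x1 by (simp add: mult_neg_pos)
    then have "f x1 < f x0" using xi by linarith
    with mn[of x1] x0 x1 show False by auto
  next
    case False
    then have xb: "x0 = b" using x0 by auto
    from neg obtain d where d: "d > 0" "\<forall>h>0. x0 - h \<in> {a..b} \<longrightarrow> h < d \<longrightarrow> f1 x0 < f1 (x0 - h)"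
      using has_real_derivative_neg_dec_left[OF d2] by force
    define x1 where "x1 = x0 - min (d/2) (x0 - a)"
    have x1: "x1 < x0" "a \<le> x1" "x0 - d < x1" using ab xb d by (auto simp: x1_def)
    obtain \<xi> where xi: "\<xi> \<in> {x1<..<x0}" "f x0 - f x1 = f1 \<xi> * (x0 - x1)"
      using mvt_simple[OF x1(1), of f "\<lambda>x h. f1 x * h"] dsub x0 x1 by force
    have "f1 \<xi> > 0" using d(2)[rule_format, of "x0 - \<xi>"] xi x0 x1 z by auto
    then have "f1 \<xi> * (x0 - x1) > 0" using xi x1 by simp
    then have "f x1 < f x0" using xi by linarith
    with mn[of x1] x0 x1 show False by auto
  qed
qed

lemma slice_x:
  assumes "continuous_on ({0..T} \<times> {0..L}) (\<lambda>(t,x). f t x)" "t \<in> {0..T}"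
  shows "continuous_on {0..L} (f t)"
proof -
  have "continuous_on {0..L} ((\<lambda>(t,x). f t x) \<circ> (\<lambda>x. (t,x)))"
    by (rule continuous_on_compose, intro continuous_intros, rule continuous_on_subset[OF assms(1)])
       (use assms(2) in auto)
  then show ?thesis by (simp add: o_def)
qed

lemma slice_t:
  assumes "continuous_on ({0..T} \<times> {0..L}) (\<lambda>(t,x). f t x)" "x \<in> {0..L}"
  shows "continuous_on {0..T} (\<lambda>t. f t x)"
proof -
  have "continuous_on {0..T} ((\<lambda>(t,x). f t x) \<circ> (\<lambda>t. (t,x)))"
    by (rule continuous_on_compose, intro continuous_intros, rule continuous_on_subset[OF assms(1)])
       (use assms(2) in auto)
  then show ?thesis by (simp add: o_def)
qed

lemma cont_bound:
  fixes g :: "'a::topological_space \<Rightarrow> real"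
  assumes "continuous_on S g" "compact S"
  shows "\<exists>B. \<forall>p\<in>S. \<bar>g p\<bar> \<le> B"
proof -
  have "bounded (g ` S)" by (rule compact_imp_bounded[OF compact_continuous_image[OF assms]])
  then show ?thesis by (auto simp: bounded_iff)
qed


locale mfgsol =
  fixes L T \<sigma> r b c :: real and uT m0 :: "real \<Rightarrow> real"
    and u ut ux uxx m mt mx mxx :: "real \<Rightarrow> real \<Rightarrow> real"
  assumes Lpos: "L > 0" and Tpos: "T > 0" and sig: "\<sigma> > 0" and rpos: "r > 0"
    and bpos: "b > 0" and cpos: "c > 0" and bc: "b + c = 1"
    and sol: "mfg_solution L T \<sigma> r b c uT m0 u ut ux uxx m mt mx mxx"
    and m0pd: "prob_density L m0" and uTnn: "\<forall>x\<in>{0..L}. uT x \<ge> 0"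
begin

abbreviation "G \<equiv> Gterm L b c ux m"
abbreviation "A t \<equiv> integral {0..L} (\<lambda>y. ux t y * m t y)"

lemma G_eq: "G t x = (b + c * A t - ux t x) / 2"
  by (simp add: Gterm_def)

lemma derivs:
  assumes "t \<in> {0..T}" "x \<in> {0..L}"
  shows dut: "((\<lambda>s. u s x) has_real_derivative ut t x) (at t within {0..T})"
    and dux: "((\<lambda>y. u t y) has_real_derivative ux t x) (at x within {0..L})"
    and duxx: "((\<lambda>y. ux t y) has_real_derivative uxx t x) (at x within {0..L})"
    and dmt: "((\<lambda>s. m s x) has_real_derivative mt t x) (at t within {0..T})"
    and dmx: "((\<lambda>y. m t y) has_real_derivative mx t x) (at x within {0..L})"
    and dmxx: "((\<lambda>y. mx t y) has_real_derivative mxx t x) (at x within {0..L})"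
  using sol assms unfolding mfg_solution_def by blast+

lemma conts:
  shows cu: "continuous_on ({0..T} \<times> {0..L}) (\<lambda>(t,x). u t x)"
    and cut: "continuous_on ({0..T} \<times> {0..L}) (\<lambda>(t,x). ut t x)"
    and cux: "continuous_on ({0..T} \<times> {0..L}) (\<lambda>(t,x). ux t x)"
    and cuxx: "continuous_on ({0..T} \<times> {0..L}) (\<lambda>(t,x). uxx t x)"
    and cm: "continuous_on ({0..T} \<times> {0..L}) (\<lambda>(t,x). m t x)"
    and cmt: "continuous_on ({0..T} \<times> {0..L}) (\<lambda>(t,x). mt t x)"
    and cmx: "continuous_on ({0..T} \<times> {0..L}) (\<lambda>(t,x). mx t x)"
    and cmxx: "continuous_on ({0..T} \<times> {0..L}) (\<lambda>(t,x). mxx t x)"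
  using sol unfolding mfg_solution_def by blast+

lemma hjb: "0 < t \<Longrightarrow> t < T \<Longrightarrow> 0 < x \<Longrightarrow> x < L \<Longrightarrow>
    ut t x + \<sigma>\<^sup>2 / 2 * uxx t x - r * u t x + (G t x)\<^sup>2 = 0"
  using sol unfolding mfg_solution_def by blast

lemma fp: "0 < t \<Longrightarrow> t < T \<Longrightarrow> 0 < x \<Longrightarrow> x < L \<Longrightarrow>
    \<exists>D. ((\<lambda>y. G t y * m t y) has_real_derivative D) (at x) \<and> mt t x - \<sigma>\<^sup>2 / 2 * mxx t x - D = 0"
  using sol unfolding mfg_solution_def by blast

lemma init: "x \<in> {0..L} \<Longrightarrow> m 0 x = m0 x" and termu: "x \<in> {0..L} \<Longrightarrow> u T x = uT x"
  using sol unfolding mfg_solution_def by blast+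

lemma neum: "t \<in> {0..T} \<Longrightarrow> ux t 0 = 0" "t \<in> {0..T} \<Longrightarrow> ux t L = 0"
  using sol unfolding mfg_solution_def by blast+

lemma noflux: "t \<in> {0..T} \<Longrightarrow> \<sigma>\<^sup>2 / 2 * mx t 0 + G t 0 * m t 0 = 0"
  "t \<in> {0..T} \<Longrightarrow> \<sigma>\<^sup>2 / 2 * mx t L + G t L * m t L = 0"
  using sol unfolding mfg_solution_def by blast+

lemma dG:
  assumes "t \<in> {0..T}" "x \<in> {0..L}"
  shows "((\<lambda>y. G t y) has_real_derivative (- uxx t x / 2)) (at x within {0..L})"
  unfolding Gterm_def
  by (rule derivative_eq_intros duxx[OF assms] | simp)+

lemma cG: "t \<in> {0..T} \<Longrightarrow> continuous_on {0..L} (\<lambda>y. G t y)"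
  unfolding Gterm_def
  by (intro continuous_intros slice_x[OF cux]) auto

lemma u_nonneg_delta:
  assumes d: "0 < \<delta>" "\<delta> \<le> T" and tx: "t \<in> {\<delta>..T}" "x \<in> {0..L}"
  shows "u t x \<ge> 0"
proof -
  let ?S = "{\<delta>..T} \<times> {0..L}"
  have "compact ?S" by (intro compact_Times compact_Icc)
  moreover have "?S \<noteq> {}" using d Lpos by auto
  moreover have "continuous_on ?S (\<lambda>(t,x). u t x)"
    by (rule continuous_on_subset[OF cu]) (use d in auto)
  ultimately obtain p where p: "p \<in> ?S" "\<forall>q\<in>?S. (\<lambda>(t,x). u t x) p \<le> (\<lambda>(t,x). u t x) q"
    using continuous_attains_inf by blast
  obtain t0 x0 where p0: "p = (t0, x0)" by (cases p)
  have t0: "\<delta> \<le> t0" "t0 \<le> T" and x0: "0 \<le> x0" "x0 \<le> L" using p p0 by auto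
  have mn: "u t0 x0 \<le> u s y" if "s \<in> {\<delta>..T}" "y \<in> {0..L}" for s y
    using p(2) p0 that by force
  have "u t0 x0 \<ge> 0"
  proof (rule ccontr)
    assume neg: "\<not> u t0 x0 \<ge> 0"
    show False
    proof (cases "t0 = T")
      case True
      then show False using neg termu[of x0] uTnn x0 by auto
    next
      case False
      then have tT: "t0 < T" using t0 by auto
      have t0i: "t0 \<in> {0..T}" using t0 d by auto
      have x0i: "x0 \<in> {0..L}" using x0 by auto
      have h1: "ut t0 x0 \<ge> 0"
        by (rule deriv_min_right[OF dut[OF t0i x0i], of "T - t0"])
           (use tT t0 d x0 mn in auto)
      have h2: "ux t0 x0 = 0"
      proof (cases "x0 = 0 \<or> x0 = L")
        case True
        then show ?thesis using neum t0i by auto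
      next
        case False
        then have xi: "0 < x0" "x0 < L" using x0 by auto
        have "ux t0 x0 \<ge> 0"
          by (rule deriv_min_right[OF dux[OF t0i x0i], of "L - x0"])
             (use xi t0 tT mn in auto)
        moreover have "ux t0 x0 \<le> 0"
          by (rule deriv_min_left[OF dux[OF t0i x0i], of "x0"])
             (use xi t0 tT mn in auto)
        ultimately show ?thesis by auto
      qed
      have h3: "uxx t0 x0 \<ge> 0"
        by (rule second_deriv_min[OF Lpos x0i, of "u t0" "ux t0"])
           (use dux[OF t0i] duxx[OF t0i x0i] h2 mn t0 in auto)
      let ?h = "\<lambda>x. ut t0 x + \<sigma>\<^sup>2 / 2 * uxx t0 x - r * u t0 x + (G t0 x)\<^sup>2"
      have hc: "continuous_on (closure {0<..<L}) ?h"
      proof -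
        have "continuous_on {0..L} ?h"
          by (intro continuous_intros slice_x[OF cut] slice_x[OF cuxx]
            slice_x[OF cu] cG t0i) auto
        then show ?thesis using Lpos by simp
      qed
      have hz: "?h x = 0" if "x \<in> {0<..<L}" for x
        using hjb[of t0 x] that t0 d tT by auto
      have "?h x0 = 0" using continuous_constant_on_closure[OF hc hz] Lpos x0 by simp
      moreover have "- r * u t0 x0 > 0" using neg rpos by (simp add: mult_pos_neg)
      moreover have "\<sigma>\<^sup>2 / 2 * uxx t0 x0 \<ge> 0" using h3 by simp
      moreover have "(G t0 x0)\<^sup>2 \<ge> 0" by simp
      ultimately show False using h1 by linarith
    qed
  qed
  then show ?thesis using mn tx by (meson order_trans)
qed

lemma u_nonneg:
  assumes "t \<in> {0..T}" "x \<in> {0..L}"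
  shows "u t x \<ge> 0"
proof (cases "t = 0")
  case False
  then show ?thesis using u_nonneg_delta[of t t x] assms by auto
next
  case True
  have "0 \<le> u t x"
  proof (rule continuous_ge_on_closure[where S="{0<..T}" and f="\<lambda>s. u s x"])
    show "continuous_on (closure {0<..T}) (\<lambda>s. u s x)"
      using Tpos slice_t[OF cu assms(2)] by simp
    show "t \<in> closure {0<..T}" using Tpos assms by simp
    show "0 \<le> u s x" if "s \<in> {0<..T}" for s
      using u_nonneg_delta[of s s x] that assms by auto
  qed
  then show ?thesis .
qed


lemma bnd2:
  fixes f :: "real \<Rightarrow> real \<Rightarrow> real"
  assumes "continuous_on ({0..T} \<times> {0..L}) (\<lambda>(t,x). f t x)"
  obtains B where "B \<ge> 0" "\<And>t x. t \<in> {0..T} \<Longrightarrow> x \<in> {0..L} \<Longrightarrow> \<bar>f t x\<bar> \<le> B"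
proof -
  obtain B where B: "\<forall>p\<in>{0..T} \<times> {0..L}. \<bar>(\<lambda>(t,x). f t x) p\<bar> \<le> B"
    using cont_bound[OF assms compact_Times[OF compact_Icc compact_Icc]] by blast
  show ?thesis
    by (rule that[of "max B 0"]) (use B in force)+
qed

lemma cmx_slice: "t \<in> {0..T} \<Longrightarrow> continuous_on {0..L} (\<lambda>y. ux t y * m t y)"
  by (intro continuous_intros slice_x[OF cux] slice_x[OF cm])

lemma G_bound:
  obtains Gb where "Gb \<ge> 0" "\<And>t x. t \<in> {0..T} \<Longrightarrow> x \<in> {0..L} \<Longrightarrow> \<bar>G t x\<bar> \<le> Gb"
proof -
  obtain Mux where Mux: "Mux \<ge> 0" "\<And>t x. t \<in> {0..T} \<Longrightarrow> x \<in> {0..L} \<Longrightarrow> \<bar>ux t x\<bar> \<le> Mux"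
    using bnd2[OF cux] by blast
  have cp: "continuous_on ({0..T} \<times> {0..L}) (\<lambda>(t,x). ux t x * m t x)"
    using continuous_on_mult[OF cux cm] by (simp add: case_prod_unfold)
  obtain Mum where Mum: "Mum \<ge> 0" "\<And>t x. t \<in> {0..T} \<Longrightarrow> x \<in> {0..L} \<Longrightarrow> \<bar>ux t x * m t x\<bar> \<le> Mum"
    using bnd2[OF cp] by blast
  have Ab: "\<bar>A t\<bar> \<le> Mum * L" if t: "t \<in> {0..T}" for t
  proof -
    have "((\<lambda>y. ux t y * m t y) has_integral A t) (cbox 0 L)"
      using integrable_continuous_real[OF cmx_slice[OF t]] by (simp add: integrable_integral)
    from has_integral_bound[OF Mum(1) this] Mum(2)[OF t] Lpos show ?thesis by simp
  qed
  show ?thesis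
  proof (rule that[of "(b + c * (Mum * L) + Mux) / 2"])
    show "0 \<le> (b + c * (Mum * L) + Mux) / 2" using bpos cpos Mum Mux Lpos by simp
    fix t x assume tx: "t \<in> {0..T}" "x \<in> {0..L}"
    have "\<bar>c * A t\<bar> \<le> c * (Mum * L)" using Ab[OF tx(1)] cpos by (simp add: abs_mult)
    then show "\<bar>G t x\<bar> \<le> (b + c * (Mum * L) + Mux) / 2"
      using Mux(2)[OF tx] bpos unfolding G_eq by (simp add: abs_le_iff)
  qed
qed


lemma pos_mult_le0: "aa > 0 \<Longrightarrow> aa * bb \<le> (0::real) \<Longrightarrow> bb \<le> 0"
  by (simp add: mult_le_0_iff)
lemma pos_mult_ge0: "aa > 0 \<Longrightarrow> 0 \<le> aa * bb \<Longrightarrow> 0 \<le> (bb::real)"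
  by (simp add: zero_le_mult_iff)
lemma pos_mult_eq0: "aa > 0 \<Longrightarrow> aa * bb = 0 \<Longrightarrow> (bb::real) = 0"
  by simp

lemma uxx_bound:
  obtains Mxx where "Mxx \<ge> 0" "\<And>t x. t \<in> {0..T} \<Longrightarrow> x \<in> {0..L} \<Longrightarrow> \<bar>uxx t x\<bar> \<le> Mxx"
  using bnd2[OF cuxx] by blast

lemma D_eq:
  assumes "0 < t" "t < T" "0 < x" "x < L"
  shows "mt t x - \<sigma>\<^sup>2 / 2 * mxx t x = - uxx t x / 2 * m t x + G t x * mx t x"
proof -
  obtain D where D: "((\<lambda>y. G t y * m t y) has_real_derivative D) (at x)" "mt t x - \<sigma>\<^sup>2 / 2 * mxx t x - D = 0"
    using fp[OF assms] by blast
  have ti: "t \<in> {0..T}" and xi: "x \<in> {0..L}" using assms by auto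
  have "((\<lambda>y. G t y * m t y) has_real_derivative (- uxx t x / 2 * m t x + G t x * mx t x)) (at x within {0..L})"
    by (rule derivative_eq_intros dG[OF ti xi] dmx[OF ti xi] | simp)+
  then have "((\<lambda>y. G t y * m t y) has_real_derivative (- uxx t x / 2 * m t x + G t x * mx t x)) (at x)"
    using at_within_Icc_at[of 0 x L] assms by simp
  with D show ?thesis using DERIV_unique by fastforce
qed

lemma m_nonneg_lt:
  assumes t1: "0 \<le> t1" "t1 < T" and tt: "t \<in> {0..t1}" and x: "x \<in> {0..L}"
  shows "m t x \<ge> 0"
proof -
  obtain Gb where Gb: "Gb \<ge> 0" "\<And>t x. t \<in> {0..T} \<Longrightarrow> x \<in> {0..L} \<Longrightarrow> \<bar>G t x\<bar> \<le> Gb"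
    using G_bound by blast
  obtain Mxx where Mxx: "Mxx \<ge> 0" "\<And>t x. t \<in> {0..T} \<Longrightarrow> x \<in> {0..L} \<Longrightarrow> \<bar>uxx t x\<bar> \<le> Mxx"
    using uxx_bound by blast
  define K where "K = 2 * (Gb + 1) / (\<sigma>\<^sup>2 * L)"
  have Kpos: "K > 0" using Gb sig Lpos by (simp add: K_def)
  have KL: "\<sigma>\<^sup>2 / 2 * (K * L) = Gb + 1" using sig Lpos by (simp add: K_def field_simps)
  define lam where "lam = \<sigma>\<^sup>2 / 2 * ((K * L)\<^sup>2 + 2 * K) + Mxx / 2 + Gb * (K * L) + 1"
  define g where "g y = exp (- K * (y - L/2)\<^sup>2)" for y
  define g1 where "g1 y = - 2 * K * (y - L/2) * g y" for y
  define g2 where "g2 y = (4 * K\<^sup>2 * (y - L/2)\<^sup>2 - 2 * K) * g y" for y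
  have gpos: "g y > 0" for y by (simp add: g_def)
  have dg: "(g has_real_derivative g1 y) (at y within S)" for y S
    unfolding g_def g1_def
    by (rule derivative_eq_intros refl | simp)+
  have dg1: "(g1 has_real_derivative g2 y) (at y within S)" for y S
    unfolding g1_def[abs_def] g2_def
    by (rule derivative_eq_intros refl dg[unfolded g1_def] | simp)+ (simp add: algebra_simps power2_eq_square, simp add: field_simps)
  define Y where "Y s y = exp (- lam * s) * g y * m s y" for s y
  let ?S = "{0..t1} \<times> {0..L}"
  have "compact ?S" by (intro compact_Times compact_Icc)
  moreover have "?S \<noteq> {}" using t1 Lpos by auto
  moreover have "continuous_on ?S (\<lambda>(s,y). Y s y)"
  proof -
    have "continuous_on ?S (\<lambda>(s,y). m s y)"
      by (rule continuous_on_subset[OF cm]) (use t1 in auto)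
    moreover have "continuous_on ?S (\<lambda>p. exp (- lam * fst p) * g (snd p))"
      unfolding g_def by (intro continuous_intros)
    ultimately show ?thesis unfolding Y_def using continuous_on_mult
      by (simp add: case_prod_unfold)
  qed
  ultimately obtain p where p: "p \<in> ?S" "\<forall>q\<in>?S. (\<lambda>(s,y). Y s y) p \<le> (\<lambda>(s,y). Y s y) q"
    using continuous_attains_inf by blast
  obtain t0 x0 where p0: "p = (t0, x0)" by (cases p)
  have t0: "0 \<le> t0" "t0 \<le> t1" and x0: "0 \<le> x0" "x0 \<le> L" using p p0 by auto
  have mn: "Y t0 x0 \<le> Y s y" if "s \<in> {0..t1}" "y \<in> {0..L}" for s y
    using p(2) p0 that by force
  have t0i: "t0 \<in> {0..T}" using t0 t1 by auto
  have x0i: "x0 \<in> {0..L}" using x0 by auto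
  have "m t0 x0 \<ge> 0"
  proof (rule ccontr)
    assume neg: "\<not> m t0 x0 \<ge> 0"
    then have mneg: "m t0 x0 < 0" by simp
    define e0 where "e0 = exp (- lam * t0)"
    have e0: "e0 > 0" by (simp add: e0_def)
    have eg: "e0 * g x0 > 0" using e0 gpos by simp
    have dF: "((\<lambda>y. Y t0 y) has_real_derivative e0 * (g1 y * m t0 y + g y * mx t0 y)) (at y within {0..L})"
      if "y \<in> {0..L}" for y
      unfolding Y_def e0_def[symmetric]
      by (rule derivative_eq_intros refl dg dmx[OF t0i that] | simp)+ (simp add: algebra_simps)
    have mnx: "Y t0 x0 \<le> Y t0 y" if "y \<in> {0..L}" for y using mn t0 that by auto
    show False
    proof (cases "t0 = 0")
      case True
      have "m0 x0 \<ge> 0" using m0pd x0i by (simp add: prob_density_def)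
      then show False using mneg init[OF x0i] True by simp
    next
      case False
      then have t0p: "0 < t0" using t0 by auto
      show False
      proof (cases "x0 = 0")
        case True
        have "0 \<le> e0 * (g1 x0 * m t0 x0 + g x0 * mx t0 x0)"
          by (rule deriv_min_right[OF dF[OF x0i], of L]) (use True Lpos mnx in auto)
        moreover have "g1 x0 = K * L * g x0" using True by (simp add: g1_def)
        ultimately have "0 \<le> (e0 * g x0) * (K * L * m t0 x0 + mx t0 x0)"
          by (simp add: algebra_simps)
        then have "0 \<le> K * L * m t0 x0 + mx t0 x0" by (rule pos_mult_ge0[OF eg])
        then have "0 \<le> \<sigma>\<^sup>2 / 2 * (K * L * m t0 x0 + mx t0 x0)" using sig by simp
        moreover have "\<sigma>\<^sup>2 / 2 * (K * L * m t0 x0 + mx t0 x0) = (\<sigma>\<^sup>2 / 2 * (K * L)) * m t0 x0 + \<sigma>\<^sup>2 / 2 * mx t0 x0"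
          by (simp add: algebra_simps)
        moreover have "\<sigma>\<^sup>2 / 2 * mx t0 x0 = - G t0 x0 * m t0 x0" using noflux(1)[OF t0i] True by simp
        moreover have "(\<sigma>\<^sup>2 / 2 * (K * L)) * m t0 x0 = (Gb + 1) * m t0 x0" using KL by simp
        ultimately have "0 \<le> (Gb + 1) * m t0 x0 - G t0 x0 * m t0 x0"
          by linarith
        then have "0 \<le> (Gb + 1 - G t0 x0) * m t0 x0" by (simp add: algebra_simps)
        moreover have "Gb + 1 - G t0 x0 > 0" using Gb(2)[OF t0i x0i] by (simp add: abs_le_iff)
        ultimately show False using mneg mult_pos_neg[of "Gb + 1 - G t0 x0" "m t0 x0"] by linarith
      next
        case x0n0: False
        show False
        proof (cases "x0 = L")
          case True
          have "e0 * (g1 x0 * m t0 x0 + g x0 * mx t0 x0) \<le> 0"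
            by (rule deriv_min_left[OF dF[OF x0i], of L]) (use True Lpos mnx in auto)
          moreover have "g1 x0 = - K * L * g x0" using True by (simp add: g1_def)
          ultimately have "(e0 * g x0) * (- K * L * m t0 x0 + mx t0 x0) \<le> 0"
            by (simp add: algebra_simps)
          then have "- K * L * m t0 x0 + mx t0 x0 \<le> 0" by (rule pos_mult_le0[OF eg])
          then have "\<sigma>\<^sup>2 / 2 * (- K * L * m t0 x0 + mx t0 x0) \<le> 0" using sig
            by (simp add: mult_nonneg_nonpos)
          moreover have "\<sigma>\<^sup>2 / 2 * (- K * L * m t0 x0 + mx t0 x0) = - ((\<sigma>\<^sup>2 / 2 * (K * L)) * m t0 x0) + \<sigma>\<^sup>2 / 2 * mx t0 x0"
            by (simp add: algebra_simps)
          moreover have "\<sigma>\<^sup>2 / 2 * mx t0 x0 = - G t0 x0 * m t0 x0" using noflux(2)[OF t0i] True by simp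
          moreover have "(\<sigma>\<^sup>2 / 2 * (K * L)) * m t0 x0 = (Gb + 1) * m t0 x0" using KL by simp
          ultimately have "- ((Gb + 1) * m t0 x0) - G t0 x0 * m t0 x0 \<le> 0"
            by linarith
          moreover have "(Gb + 1 + G t0 x0) * (- m t0 x0) = - ((Gb + 1) * m t0 x0) - G t0 x0 * m t0 x0"
            by (simp add: algebra_simps)
          ultimately have "(Gb + 1 + G t0 x0) * (- m t0 x0) \<le> 0" by linarith
          moreover have "Gb + 1 + G t0 x0 > 0" using Gb(2)[OF t0i x0i] by (simp add: abs_le_iff)
          ultimately show False using mneg mult_pos_pos[of "Gb + 1 + G t0 x0" "- m t0 x0"] by linarith
        next
          case False
          then have xi: "0 < x0" "x0 < L" using x0 x0n0 by auto
          have t0T: "t0 < T" using t0 t1 by auto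
          define p where "p = 2 * K * (x0 - L/2)"
          have g1p: "g1 x0 = - p * g x0" by (simp add: g1_def p_def)
          have g2p: "g2 x0 = (p\<^sup>2 - 2 * K) * g x0" by (simp add: g2_def p_def power2_eq_square)
          have F1: "e0 * (g1 x0 * m t0 x0 + g x0 * mx t0 x0) = 0"
          proof -
            have "0 \<le> e0 * (g1 x0 * m t0 x0 + g x0 * mx t0 x0)"
              by (rule deriv_min_right[OF dF[OF x0i], of "L - x0"]) (use xi mnx in auto)
            moreover have "e0 * (g1 x0 * m t0 x0 + g x0 * mx t0 x0) \<le> 0"
              by (rule deriv_min_left[OF dF[OF x0i], of x0]) (use xi mnx in auto)
            ultimately show ?thesis by linarith
          qed
          then have "(e0 * g x0) * (mx t0 x0 - p * m t0 x0) = 0" using g1p by (simp add: algebra_simps)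
          then have "mx t0 x0 - p * m t0 x0 = 0" by (rule pos_mult_eq0[OF eg])
          then have mxp: "mx t0 x0 = p * m t0 x0" by simp
          have dF1: "((\<lambda>y. e0 * (g1 y * m t0 y + g y * mx t0 y)) has_real_derivative
              e0 * (g2 x0 * m t0 x0 + g1 x0 * mx t0 x0 + (g1 x0 * mx t0 x0 + g x0 * mxx t0 x0)))
              (at x0 within {0..L})"
            by (rule derivative_eq_intros refl dg dg1 dmx[OF t0i x0i] dmxx[OF t0i x0i] | simp)+
          have "0 \<le> e0 * (g2 x0 * m t0 x0 + g1 x0 * mx t0 x0 + (g1 x0 * mx t0 x0 + g x0 * mxx t0 x0))"
            by (rule second_deriv_min[OF Lpos x0i dF dF1 F1]) (use mnx in auto)
          then have "0 \<le> (e0 * g x0) * ((p\<^sup>2 - 2 * K) * m t0 x0 - 2 * p * mx t0 x0 + mxx t0 x0)"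
            using g1p g2p by (simp add: algebra_simps)
          then have "0 \<le> (p\<^sup>2 - 2 * K) * m t0 x0 - 2 * p * mx t0 x0 + mxx t0 x0"
            by (rule pos_mult_ge0[OF eg])
          then have mxx: "(p\<^sup>2 + 2 * K) * m t0 x0 \<le> mxx t0 x0"
            using mxp by (simp add: algebra_simps power2_eq_square)
          have dY: "((\<lambda>s. Y s x0) has_real_derivative g x0 * (- lam * e0 * m t0 x0 + e0 * mt t0 x0))
              (at t0 within {0..T})"
            unfolding Y_def e0_def
            by (rule derivative_eq_intros refl dmt[OF t0i x0i] | simp)+ (simp add: algebra_simps)
          have "g x0 * (- lam * e0 * m t0 x0 + e0 * mt t0 x0) \<le> 0"
            by (rule deriv_min_left[OF dY, of t0]) (use t0p t0 t1 mn x0i in auto)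
          then have "(e0 * g x0) * (mt t0 x0 - lam * m t0 x0) \<le> 0" by (simp add: algebra_simps)
          then have "mt t0 x0 - lam * m t0 x0 \<le> 0" by (rule pos_mult_le0[OF eg])
          then have mtl: "mt t0 x0 \<le> lam * m t0 x0" by linarith
          define \<kappa> where "\<kappa> = \<sigma>\<^sup>2 / 2 * (p\<^sup>2 + 2 * K) - uxx t0 x0 / 2 + G t0 x0 * p"
          have "mt t0 x0 = \<sigma>\<^sup>2 / 2 * mxx t0 x0 - uxx t0 x0 / 2 * m t0 x0 + G t0 x0 * mx t0 x0"
            using D_eq[OF t0p t0T xi] by simp
          moreover have "\<sigma>\<^sup>2 / 2 * ((p\<^sup>2 + 2 * K) * m t0 x0) \<le> \<sigma>\<^sup>2 / 2 * mxx t0 x0"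
            using mxx sig by simp
          moreover have "\<kappa> * m t0 x0 = \<sigma>\<^sup>2 / 2 * ((p\<^sup>2 + 2 * K) * m t0 x0) - uxx t0 x0 / 2 * m t0 x0 + G t0 x0 * (p * m t0 x0)"
            unfolding \<kappa>_def by (simp add: algebra_simps)
          moreover have "G t0 x0 * mx t0 x0 = G t0 x0 * (p * m t0 x0)" using mxp by simp
          ultimately have "\<kappa> * m t0 x0 \<le> mt t0 x0" by linarith
          with mtl have "(\<kappa> - lam) * m t0 x0 \<le> 0" by (simp add: algebra_simps)
          then have kl: "lam \<le> \<kappa>" using mneg by (simp add: mult_le_0_iff)
          have pb: "\<bar>p\<bar> \<le> K * L" using xi Kpos by (simp add: p_def abs_mult) (auto simp: abs_if)
          have p2: "p\<^sup>2 \<le> (K * L)\<^sup>2" using power_mono[OF pb abs_ge_zero, of 2] by simp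
          have "\<bar>G t0 x0 * p\<bar> \<le> Gb * (K * L)"
            unfolding abs_mult by (rule mult_mono) (use Gb(2)[OF t0i x0i] pb Gb in auto)
          then have q1: "G t0 x0 * p \<le> Gb * (K * L)" by (simp add: abs_le_iff)
          have q2: "- uxx t0 x0 / 2 \<le> Mxx / 2" using Mxx(2)[OF t0i x0i] by (simp add: abs_le_iff)
          have q3: "\<sigma>\<^sup>2 / 2 * (p\<^sup>2 + 2 * K) \<le> \<sigma>\<^sup>2 / 2 * ((K * L)\<^sup>2 + 2 * K)"
            using p2 sig by simp
          have "\<kappa> < lam" unfolding \<kappa>_def lam_def using q1 q2 q3 by linarith
          with kl show False by simp
        qed
      qed
    qed
  qed
  then have "Y t0 x0 \<ge> 0" unfolding Y_def using less_imp_le[OF gpos[of x0]] by simp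
  then have "Y t x \<ge> 0" using mn tt x by (meson order_trans)
  then show ?thesis unfolding Y_def using pos_mult_ge0[of "exp (- lam * t) * g x" "m t x"] gpos[of x] by simp
qed


lemma m_nonneg:
  assumes "t \<in> {0..T}" "x \<in> {0..L}"
  shows "m t x \<ge> 0"
proof (cases "t < T")
  case True
  then show ?thesis using m_nonneg_lt[of t t x] assms by auto
next
  case False
  have "0 \<le> m t x"
  proof (rule continuous_ge_on_closure[where S="{0..<T}" and f="\<lambda>s. m s x"])
    show "continuous_on (closure {0..<T}) (\<lambda>s. m s x)"
      using Tpos slice_t[OF cm assms(2)] by simp
    show "t \<in> closure {0..<T}" using Tpos assms by simp
    show "0 \<le> m s x" if "s \<in> {0..<T}" for s
      using m_nonneg_lt[of s s x] that assms by auto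
  qed
  then show ?thesis .
qed

lemma int_cont: fixes f :: "real \<Rightarrow> real" assumes "continuous_on {p..q} f" shows "(f has_integral integral {p..q} f) {p..q}"
  using integrable_integral[OF integrable_continuous_interval[OF assms]] .

lemma leib:
  fixes f fx :: "real \<Rightarrow> real \<Rightarrow> real"
  assumes d: "\<And>s x. s \<in> {0..T} \<Longrightarrow> x \<in> {0..L} \<Longrightarrow> ((\<lambda>s. f s x) has_real_derivative fx s x) (at s within {0..T})"
    and cf: "continuous_on ({0..T} \<times> {0..L}) (\<lambda>(s,x). f s x)"
    and cfx: "continuous_on ({0..T} \<times> {0..L}) (\<lambda>(s,x). fx s x)"
    and t: "t \<in> {0..T}"
  shows "((\<lambda>s. integral {0..L} (f s)) has_real_derivative integral {0..L} (fx t)) (at t within {0..T})"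
proof -
  have "((\<lambda>s. integral (cbox 0 L) (f s)) has_field_derivative integral (cbox 0 L) (fx t)) (at t within {0..T})"
  proof (rule leibniz_rule_field_derivative)
    show "((\<lambda>s. f s x) has_field_derivative fx s x) (at s within {0..T})"
      if "s \<in> {0..T}" "x \<in> cbox 0 L" for s x using d that by simp
    show "f s integrable_on cbox 0 L" if "s \<in> {0..T}" for s
      using integrable_continuous_interval[OF slice_x[OF cf that]] by simp
    show "continuous_on ({0..T} \<times> cbox 0 L) (\<lambda>(s,x). fx s x)" using cfx by simp
  qed (use t in auto)
  then show ?thesis by simp
qed

lemma mass_zero:
  assumes t: "0 < t" "t < T"
  shows "integral {0..L} (mt t) = 0"
proof -
  have ti: "t \<in> {0..T}" using t by auto
  let ?F = "\<lambda>x. \<sigma>\<^sup>2 / 2 * mx t x + G t x * m t x"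
  have "(mt t has_integral ?F L - ?F 0) {0..L}"
  proof (rule fundamental_theorem_of_calculus_interior)
    show "0 \<le> L" using Lpos by simp
    show "continuous_on {0..L} ?F"
      by (intro continuous_intros slice_x[OF cmx] slice_x[OF cm] cG ti)
    fix x assume x: "x \<in> {0<..<L}"
    then have xi: "x \<in> {0..L}" by auto
    obtain D where D: "((\<lambda>y. G t y * m t y) has_real_derivative D) (at x)" "mt t x - \<sigma>\<^sup>2 / 2 * mxx t x - D = 0"
      using fp[OF t] x by auto
    have dmxa: "((\<lambda>y. mx t y) has_real_derivative mxx t x) (at x)"
      using dmxx[OF ti xi] at_within_Icc_at[of 0 x L] x by simp
    have "(?F has_real_derivative \<sigma>\<^sup>2 / 2 * mxx t x + D) (at x)"
      using DERIV_add[OF DERIV_cmult[where c="\<sigma>\<^sup>2 / 2", OF dmxa] D(1)] by simp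
    moreover have "\<sigma>\<^sup>2 / 2 * mxx t x + D = mt t x" using D(2) by simp
    ultimately show "(?F has_vector_derivative mt t x) (at x)"
      by (simp add: has_real_derivative_iff_has_vector_derivative)
  qed
  moreover have "?F L = 0" "?F 0 = 0" using noflux[OF ti] by auto
  ultimately show ?thesis by (simp add: integral_unique)
qed

lemma mass:
  assumes t: "t \<in> {0..T}"
  shows "integral {0..L} (m t) = 1"
proof -
  have dM: "((\<lambda>s. integral {0..L} (m s)) has_real_derivative integral {0..L} (mt s)) (at s within {0..T})"
    if "s \<in> {0..T}" for s
    by (rule leib[OF dmt cm cmt that])
  have M0: "integral {0..L} (m 0) = 1"
  proof -
    have "integral {0..L} (m 0) = integral {0..L} m0" by (rule integral_cong) (simp add: init)
    then show ?thesis using m0pd by (simp add: prob_density_def)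
  qed
  show ?thesis
  proof (cases "t = 0")
    case True then show ?thesis using M0 by simp
  next
    case False
    then have tp: "0 < t" using t by auto
    have "\<exists>\<xi>\<in>{0<..<t}. integral {0..L} (m t) - integral {0..L} (m 0) = integral {0..L} (mt \<xi>) * (t - 0)"
    proof (rule mvt_simple[OF tp])
      fix s assume s: "0 \<le> s" "s \<le> t"
      then have "((\<lambda>s. integral {0..L} (m s)) has_real_derivative integral {0..L} (mt s)) (at s within {0..t})"
        using has_field_derivative_subset[OF dM] t by auto
      then show "((\<lambda>s. integral {0..L} (m s)) has_derivative (\<lambda>h. integral {0..L} (mt s) * h)) (at s within {0..t})"
        by (simp add: has_field_derivative_def)
    qed
    then obtain \<xi> where "\<xi> \<in> {0<..<t}" "integral {0..L} (m t) - integral {0..L} (m 0) = integral {0..L} (mt \<xi>) * t"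
      by auto
    moreover have "integral {0..L} (mt \<xi>) = 0" using mass_zero calculation t by auto
    ultimately show ?thesis using M0 by simp
  qed
qed


abbreviation "E s \<equiv> integral {0..L} (\<lambda>x. u s x * m s x)"
abbreviation "Q s \<equiv> integral {0..L} (\<lambda>x. m s x * (ux s x)\<^sup>2)"
abbreviation "bt s \<equiv> b + c * A s"

lemma cE: "t \<in> {0..T} \<Longrightarrow> continuous_on {0..L} (\<lambda>x. u t x * m t x)"
  by (intro continuous_intros slice_x[OF cu] slice_x[OF cm])
lemma cQ: "t \<in> {0..T} \<Longrightarrow> continuous_on {0..L} (\<lambda>x. m t x * (ux t x)\<^sup>2)"
  by (intro continuous_intros slice_x[OF cux] slice_x[OF cm])
lemma cM: "t \<in> {0..T} \<Longrightarrow> continuous_on {0..L} (\<lambda>x. m t x)"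
  by (intro continuous_intros slice_x[OF cm])

lemma E_identity:
  assumes t: "0 < t" "t < T"
  shows "integral {0..L} (\<lambda>x. ut t x * m t x + u t x * mt t x) = r * E t - (bt t)\<^sup>2 / 4 + Q t / 4"
proof -
  have ti: "t \<in> {0..T}" using t by auto
  define h where "h x = ut t x * m t x + u t x * mt t x - r * (u t x * m t x) + ((bt t)\<^sup>2 - (ux t x)\<^sup>2) / 4 * m t x" for x
  define F where "F x = \<sigma>\<^sup>2 / 2 * (u t x * mx t x - ux t x * m t x) + u t x * (G t x * m t x)" for x
  have hI: "(h has_integral F L - F 0) {0..L}"
  proof (rule fundamental_theorem_of_calculus_interior)
    show "0 \<le> L" using Lpos by simp
    show "continuous_on {0..L} F" unfolding F_def
      by (intro continuous_intros slice_x[OF cmx] slice_x[OF cm] slice_x[OF cu] slice_x[OF cux] cG ti)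
    fix x assume x: "x \<in> {0<..<L}"
    then have xi: "x \<in> {0..L}" by auto
    have xo: "0 < x" "x < L" using x by auto
    define Fd where "Fd = \<sigma>\<^sup>2 / 2 * (ux t x * mx t x + u t x * mxx t x - (uxx t x * m t x + ux t x * mx t x))
        + (ux t x * (G t x * m t x) + u t x * (- uxx t x / 2 * m t x + G t x * mx t x))"
    have "(F has_real_derivative Fd) (at x within {0..L})"
      unfolding F_def[abs_def] Fd_def
      by (rule derivative_eq_intros refl dux[OF ti xi] dmx[OF ti xi] duxx[OF ti xi] dmxx[OF ti xi] dG[OF ti xi] | simp)+
         (simp add: algebra_simps)
    then have dF: "(F has_real_derivative Fd) (at x)"
      using at_within_Icc_at[of 0 x L] xo by simp
    have e1: "ut t x = - (\<sigma>\<^sup>2 / 2 * uxx t x) + r * u t x - (G t x)\<^sup>2" using hjb[OF t xo] by linarith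
    have e2: "mt t x = \<sigma>\<^sup>2 / 2 * mxx t x + (- uxx t x / 2 * m t x + G t x * mx t x)"
      using D_eq[OF t xo] by linarith
    have Gx: "G t x = (bt t - ux t x) / 2" by (simp add: G_eq)
    have e3: "((bt t)\<^sup>2 - (ux t x)\<^sup>2) / 4 = (G t x)\<^sup>2 + ux t x * G t x"
      unfolding Gx by (simp add: power2_eq_square field_simps)
    have "h x = Fd" unfolding h_def Fd_def e1 e2 e3 by (simp add: algebra_simps power2_eq_square)
    with dF show "(F has_vector_derivative h x) (at x)"
      by (simp add: has_real_derivative_iff_has_vector_derivative)
  qed
  have "F 0 = u t 0 * (\<sigma>\<^sup>2 / 2 * mx t 0 + G t 0 * m t 0)" using neum(1)[OF ti]
    by (simp add: F_def algebra_simps)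
  moreover have "F L = u t L * (\<sigma>\<^sup>2 / 2 * mx t L + G t L * m t L)" using neum(2)[OF ti]
    by (simp add: F_def algebra_simps)
  ultimately have F0: "F L - F 0 = 0" using noflux[OF ti] by simp
  have I2: "((\<lambda>x. r * (u t x * m t x)) has_integral r * E t) {0..L}"
    by (rule has_integral_mult_right[OF int_cont[OF cE[OF ti]]])
  have I3: "((\<lambda>x. (bt t)\<^sup>2 / 4 * m t x) has_integral (bt t)\<^sup>2 / 4 * 1) {0..L}"
    using has_integral_mult_right[OF int_cont[OF cM[OF ti]], of "(bt t)\<^sup>2 / 4"] mass[OF ti] by simp
  have I4: "((\<lambda>x. 1 / 4 * (m t x * (ux t x)\<^sup>2)) has_integral 1 / 4 * Q t) {0..L}"
    by (rule has_integral_mult_right[OF int_cont[OF cQ[OF ti]]])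
  have "((\<lambda>x. h x + r * (u t x * m t x) - (bt t)\<^sup>2 / 4 * m t x + 1 / 4 * (m t x * (ux t x)\<^sup>2))
      has_integral (F L - F 0) + r * E t - (bt t)\<^sup>2 / 4 * 1 + 1 / 4 * Q t) {0..L}"
    by (intro has_integral_add has_integral_diff hI I2 I3 I4)
  moreover have "(\<lambda>x. h x + r * (u t x * m t x) - (bt t)\<^sup>2 / 4 * m t x + 1 / 4 * (m t x * (ux t x)\<^sup>2))
      = (\<lambda>x. ut t x * m t x + u t x * mt t x)"
    by (rule ext) (simp add: h_def algebra_simps diff_divide_distrib)
  ultimately have "((\<lambda>x. ut t x * m t x + u t x * mt t x) has_integral r * E t - (bt t)\<^sup>2 / 4 + Q t / 4) {0..L}"
    using F0 by simp
  then show ?thesis by (rule integral_unique)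
qed


lemma A_sq:
  assumes t: "t \<in> {0..T}"
  shows "(A t)\<^sup>2 \<le> Q t"
proof -
  have c1: "continuous_on {0..L} (\<lambda>x. m t x * (ux t x - A t)\<^sup>2)"
    by (intro continuous_intros slice_x[OF cux] slice_x[OF cm] t)
  have I: "((\<lambda>x. m t x * (ux t x - A t)\<^sup>2) has_integral integral {0..L} (\<lambda>x. m t x * (ux t x - A t)\<^sup>2)) {0..L}"
    by (rule int_cont[OF c1])
  have nn: "0 \<le> integral {0..L} (\<lambda>x. m t x * (ux t x - A t)\<^sup>2)"
    by (rule has_integral_nonneg[OF I]) (use m_nonneg t in auto)
  have IM: "(m t has_integral 1) {0..L}" using int_cont[OF cM[OF t]] mass[OF t] by simp
  have J: "((\<lambda>x. m t x * (ux t x)\<^sup>2 - 2 * A t * (ux t x * m t x) + (A t)\<^sup>2 * m t x)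
      has_integral Q t - 2 * A t * A t + (A t)\<^sup>2 * 1) {0..L}"
    by (rule has_integral_add[OF has_integral_diff[OF int_cont[OF cQ[OF t]]
          has_integral_mult_right[OF int_cont[OF cmx_slice[OF t]]]] has_integral_mult_right[OF IM]])
  have eq: "(\<lambda>x. m t x * (ux t x)\<^sup>2 - 2 * A t * (ux t x * m t x) + (A t)\<^sup>2 * m t x)
      = (\<lambda>x. m t x * (ux t x - A t)\<^sup>2)"
    by (rule ext) (simp add: power2_eq_square algebra_simps)
  have "integral {0..L} (\<lambda>x. m t x * (ux t x - A t)\<^sup>2) = Q t - 2 * A t * A t + (A t)\<^sup>2 * 1"
    using J unfolding eq by (rule integral_unique)
  with nn show ?thesis by (simp add: power2_eq_square)

qed


lemma E_nonneg: "t \<in> {0..T} \<Longrightarrow> 0 \<le> E t"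
  by (rule has_integral_nonneg[OF int_cont[OF cE]]) (auto intro!: mult_nonneg_nonneg u_nonneg m_nonneg)

lemma dE: "s \<in> {0..T} \<Longrightarrow> ((\<lambda>s. E s) has_real_derivative
    integral {0..L} (\<lambda>x. ut s x * m s x + u s x * mt s x)) (at s within {0..T})"
proof -
  assume s: "s \<in> {0..T}"
  have cf: "continuous_on ({0..T} \<times> {0..L}) (\<lambda>(s,x). u s x * m s x)"
    using continuous_on_mult[OF cu cm] by (simp add: case_prod_unfold)
  have cfx: "continuous_on ({0..T} \<times> {0..L}) (\<lambda>(s,x). ut s x * m s x + u s x * mt s x)"
    using continuous_on_add[OF continuous_on_mult[OF cut cm] continuous_on_mult[OF cu cmt]]
    by (simp add: case_prod_unfold)
  have d: "((\<lambda>s. u s x * m s x) has_real_derivative ut s x * m s x + u s x * mt s x) (at s within {0..T})"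
    if "s \<in> {0..T}" "x \<in> {0..L}" for s x
    using DERIV_mult[OF dut[OF that] dmt[OF that]] by (simp add: algebra_simps)
  show ?thesis
    using leib[where f="\<lambda>s x. u s x * m s x" and fx="\<lambda>s x. ut s x * m s x + u s x * mt s x", OF d cf cfx s]
    by simp
qed

lemma ET_bound:
  assumes B: "\<And>x. x \<in> {0..L} \<Longrightarrow> uT x \<le> B"
  shows "E T \<le> B"
proof -
  have Ti: "T \<in> {0..T}" using Tpos by simp
  have IM: "((\<lambda>x. B * m T x) has_integral B * 1) {0..L}"
    using has_integral_mult_right[OF int_cont[OF cM[OF Ti]], of B] mass[OF Ti] by simp
  have "E T \<le> B * 1"
  proof (rule has_integral_le[OF int_cont[OF cE[OF Ti]] IM])
    fix x assume x: "x \<in> {0..L}"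
    show "u T x * m T x \<le> B * m T x"
      using B[OF x] termu[OF x] m_nonneg[OF Ti x] by (simp add: mult_right_mono)
  qed
  then show ?thesis by simp
qed

lemma Q_bound:
  assumes B: "B \<ge> 0" "\<And>x. x \<in> {0..L} \<Longrightarrow> uT x \<le> B"
  shows "integral {0..T} (\<lambda>s. Q s) \<le> 4 * B / b + T"
proof (cases "(\<lambda>s. Q s) integrable_on {0..T}")
  case False
  then have "integral {0..T} (\<lambda>s. Q s) = 0" by (rule not_integrable_integral)
  moreover have "0 \<le> 4 * B / b + T" using B bpos Tpos by simp
  ultimately show ?thesis by simp
next
  case True
  define g where "g s = r * E s - (bt s)\<^sup>2 / 4 + Q s / 4" for s
  have contE: "continuous_on {0..T} (\<lambda>s. E s)"
    by (rule DERIV_continuous_on[OF dE])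
  have gI: "(g has_integral E T - E 0) {0..T}"
  proof (rule fundamental_theorem_of_calculus_interior)
    show "0 \<le> T" using Tpos by simp
    show "continuous_on {0..T} (\<lambda>s. E s)" by (rule contE)
    fix s assume s: "s \<in> {0<..<T}"
    then have si: "s \<in> {0..T}" by auto
    have "((\<lambda>s. E s) has_real_derivative integral {0..L} (\<lambda>x. ut s x * m s x + u s x * mt s x)) (at s)"
      using dE[OF si] at_within_Icc_at[of 0 s T] s by simp
    then have "((\<lambda>s. E s) has_real_derivative g s) (at s)"
      using E_identity[of s] s by (simp add: g_def)
    then show "((\<lambda>s. E s) has_vector_derivative g s) (at s)"
      by (simp add: has_real_derivative_iff_has_vector_derivative)
  qed
  have EI: "((\<lambda>s. E s) has_integral integral {0..T} (\<lambda>s. E s)) {0..T}"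
    by (rule int_cont[OF contE])
  have EIn: "0 \<le> integral {0..T} (\<lambda>s. E s)"
    by (rule has_integral_nonneg[OF EI]) (rule E_nonneg)
  have QI: "((\<lambda>s. b * Q s) has_integral b * integral {0..T} (\<lambda>s. Q s)) {0..T}"
    by (rule has_integral_mult_right[OF integrable_integral[OF True]])
  have RI: "((\<lambda>s. 4 * g s - 4 * r * E s + b) has_integral
      4 * (E T - E 0) - 4 * r * integral {0..T} (\<lambda>s. E s) + b * T) {0..T}"
  proof -
    have cI: "((\<lambda>s. b) has_integral b * T) {0..T}" using has_integral_const_real[of b 0 T] Tpos by (simp add: mult.commute)
    show ?thesis
      by (rule has_integral_add[OF has_integral_diff[OF has_integral_mult_right[OF gI]
            has_integral_mult_right[OF EI]] cI])
  qed
  have pw: "b * Q s \<le> 4 * g s - 4 * r * E s + b" if s: "s \<in> {0..T}" for s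
  proof -
    have a2: "(A s)\<^sup>2 \<le> Q s" by (rule A_sq[OF s])
    have cb: "c = 1 - b" using bc by simp
    have "(bt s)\<^sup>2 = b + c * (A s)\<^sup>2 - b * c * (1 - A s)\<^sup>2"
      unfolding cb by (simp add: power2_eq_square algebra_simps)
    moreover have "0 \<le> b * c * (1 - A s)\<^sup>2" using bpos cpos by simp
    moreover have "c * (A s)\<^sup>2 \<le> c * Q s" using a2 cpos by simp
    ultimately have "(bt s)\<^sup>2 \<le> b + c * Q s" by linarith
    moreover have "4 * g s - 4 * r * E s + b = Q s - (bt s)\<^sup>2 + b" by (simp add: g_def algebra_simps)
    moreover have "b * Q s = Q s - c * Q s"
    proof -
      have "(b + c) * Q s = Q s" using bc by simp
      then show ?thesis by (simp add: distrib_right)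
    qed
    ultimately show ?thesis by linarith
  qed
  have "b * integral {0..T} (\<lambda>s. Q s) \<le> 4 * (E T - E 0) - 4 * r * integral {0..T} (\<lambda>s. E s) + b * T"
    by (rule has_integral_le[OF QI RI pw])
  moreover have "E T \<le> B" by (rule ET_bound[OF B(2)])
  moreover have "0 \<le> E 0" using E_nonneg Tpos by simp
  moreover have "0 \<le> 4 * r * integral {0..T} (\<lambda>s. E s)" using rpos EIn by simp
  ultimately have "b * integral {0..T} (\<lambda>s. Q s) \<le> 4 * B + b * T" by (smt (verit))
  then have "integral {0..T} (\<lambda>s. Q s) \<le> (4 * B + b * T) / b"
    using bpos by (simp add: field_simps)
  also have "\<dots> = 4 * B / b + T" using bpos by (simp add: field_simps)
  finally show ?thesis .
qed

end
theorem proposition2p1: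
  fixes L T \<sigma> r \<epsilon> \<gamma> b c :: real
    and uT uT1 uT2 m0 m01 m02 :: "real \<Rightarrow> real"
  assumes "L > 0" and "T > 0" and "\<sigma> > 0" and "r > 0" and "\<epsilon> > 0"
    and "b = 2 / (2 + \<epsilon>)" and "c = \<epsilon> / (2 + \<epsilon>)"
    and "\<gamma> > 0"
    and "C2_holder \<gamma> L uT uT1 uT2" and "C2_holder \<gamma> L m0 m01 m02"
    and "uT1 0 = 0" and "uT1 L = 0"
    and "m0 0 = 0" and "m01 0 = 0" and "m0 L = 0" and "m01 L = 0"
    and "prob_density L m0"
    and "\<forall>x\<in>{0..L}. uT x \<ge> 0"
  shows "(\<forall>u ut ux uxx m mt mx mxx.
            mfg_solution L T \<sigma> r b c uT m0 u ut ux uxx m mt mx mxx \<longrightarrow>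
              (\<forall>t\<in>{0..T}. prob_density L (m t)) \<and>
              (\<forall>t\<in>{0..T}. \<forall>x\<in>{0..L}. u t x \<ge> 0))
       \<and> (\<exists>C>0. \<forall>u ut ux uxx m mt mx mxx.
            mfg_solution L T \<sigma> r b c uT m0 u ut ux uxx m mt mx mxx \<longrightarrow>
              integral {0..T} (\<lambda>t. integral {0..L} (\<lambda>x. m t x * (ux t x)\<^sup>2)) \<le> C)"
  proof -
  have bpos: "b > 0" using assms(5,6) by simp
  have cpos: "c > 0" using assms(5,7) by simp
  have "b + c = (2 + \<epsilon>) / (2 + \<epsilon>)" unfolding assms(6,7) by (rule add_divide_distrib[symmetric])
  then have bc: "b + c = 1" using assms(5) by simp
  have uTc: "continuous_on {0..L} uT"
    using assms(9) unfolding C2_holder_def by (intro DERIV_continuous_on) auto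
  obtain B0 where B0: "\<forall>x\<in>{0..L}. \<bar>uT x\<bar> \<le> B0"
    using cont_bound[OF uTc compact_Icc] by auto
  define B where "B = max B0 0"
  have B: "B \<ge> 0" "\<And>x. x \<in> {0..L} \<Longrightarrow> uT x \<le> B"
    unfolding B_def using B0 by (simp_all add: abs_le_iff le_max_iff_disj)
  have loc: "mfgsol L T \<sigma> r b c uT m0 u ut ux uxx m mt mx mxx"
    if "mfg_solution L T \<sigma> r b c uT m0 u ut ux uxx m mt mx mxx" for u ut ux uxx m mt mx mxx
    using that assms bpos cpos bc by (unfold_locales) auto
  show ?thesis
  proof (intro conjI allI impI)
    fix u ut ux uxx m mt mx mxx
    assume sol: "mfg_solution L T \<sigma> r b c uT m0 u ut ux uxx m mt mx mxx"
    interpret S: mfgsol L T \<sigma> r b c uT m0 u ut ux uxx m mt mx mxx by (rule loc[OF sol])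
    show "\<forall>t\<in>{0..T}. prob_density L (m t)"
    proof
      fix t assume t: "t \<in> {0..T}"
      show "prob_density L (m t)" unfolding prob_density_def
        using S.m_nonneg[OF t] integrable_continuous_interval[OF S.cM[OF t]] S.mass[OF t] by auto
    qed
    show "\<forall>t\<in>{0..T}. \<forall>x\<in>{0..L}. u t x \<ge> 0" using S.u_nonneg by auto
  next
    show "\<exists>C>0. \<forall>u ut ux uxx m mt mx mxx.
            mfg_solution L T \<sigma> r b c uT m0 u ut ux uxx m mt mx mxx \<longrightarrow>
              integral {0..T} (\<lambda>t. integral {0..L} (\<lambda>x. m t x * (ux t x)\<^sup>2)) \<le> C"
    proof (intro exI conjI allI impI)
      have "0 \<le> 4 * B / b" using B(1) bpos by simp
      then show "0 < 4 * B / b + T + 1" using assms(2) by linarith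
      fix u ut ux uxx m mt mx mxx
      assume sol: "mfg_solution L T \<sigma> r b c uT m0 u ut ux uxx m mt mx mxx"
      interpret S: mfgsol L T \<sigma> r b c uT m0 u ut ux uxx m mt mx mxx by (rule loc[OF sol])
      show "integral {0..T} (\<lambda>t. integral {0..L} (\<lambda>x. m t x * (ux t x)\<^sup>2)) \<le> 4 * B / b + T + 1"
        using S.Q_bound[OF B] by simp
    qed
  qed
qed

end
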